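(* Among all $(G,\phi,\tau)$ with $G\in\Gamma(F)$, $\phi=(\phi_t,\phi_d)$ with $\phi_d=0$, satisfying (w-P) and (w-HE), the objective $\phi_t+\phi_d(1-G(\tau))$ is maximized by the test-fee structure $(F,\phi)$ with $\phi_d=0$ and $\phi_t=\int_{\mu}^{\overline{\theta}}[s-\mu]\,dF(s)$; that is, this test-fee structure is robustly optimal among all test-fee structures with zero disclosure fee.
   Context: $F$ is a distribution of the asset value with lowest and highest support points $0\le\underline{\theta}<\overline{\theta}<\infty$ and mean $\mu$. $\Gamma(F)$ is the set of CDFs $G$ supported in $[\underline{\theta},\overline{\theta}]$ with $\int_{\underline{\theta}}^xG\le\int_{\underline{\theta}}^xF$ for all $x$ and equality at $x=\overline{\theta}$ (score distributions of unbiased tests). A test-fee structure is $(G,\phi)$ with $G\in\Gamma(F)$ and fees $\phi=(\phi_t,\phi_d)$ (testing, disclosure). (w-P): $\phi_t\le\int_{\mu+\phi_d}^{\overline{\theta}}[s-(\mu+\phi_d)]dG(s)$. (w-HE) for threshold $\tau$: $\tau-\phi_d=E_G[s\mid s\le\tau]$ and $\tau'-\phi_d\ge E_G[s\mid s\le\tau']$ for all $\tau'>\tau$. *)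

theory Defs
  imports "HOL-Probability.Probability"
begin

definition supported_dist :: "real measure \<Rightarrow> real \<Rightarrow> real \<Rightarrow> bool" where
  "supported_dist G lo hi \<longleftrightarrow>
     prob_space G \<and> sets G = sets borel \<and> measure G (- {lo..hi}) = 0"

definition support_bounds :: "real measure \<Rightarrow> real \<Rightarrow> real \<Rightarrow> bool" where
  "support_bounds F lo hi \<longleftrightarrow>
     supported_dist F lo hi \<and>
     (\<forall>e>0. measure F {..<lo + e} > 0) \<and> (\<forall>e>0. measure F {hi - e<..} > 0)"

text \<open>Gamma(F): score distributions of unbiased tests.\<close>
definition GammaF :: "real measure \<Rightarrow> real \<Rightarrow> real \<Rightarrow> real measure set" where
  "GammaF F lo hi = {G. supported_dist G lo hi \<and>
     (\<forall>x. (\<integral>s\<in>{lo..x}. cdf G s \<partial>lborel) \<le> (\<integral>s\<in>{lo..x}. cdf F s \<partial>lborel)) \<and>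
     (\<integral>s\<in>{lo..hi}. cdf G s \<partial>lborel) = (\<integral>s\<in>{lo..hi}. cdf F s \<partial>lborel)}"

text \<open>Conditional mean E_G[s | s \<le> t]; convention: equal to t if G(t) = 0.\<close>
definition cond_mean :: "real measure \<Rightarrow> real \<Rightarrow> real" where
  "cond_mean G t = (if cdf G t = 0 then t
     else (\<integral>s\<in>{..t}. s \<partial>G) / cdf G t)"

definition wP :: "real measure \<Rightarrow> real \<Rightarrow> real \<Rightarrow> real \<Rightarrow> real \<Rightarrow> bool" where
  "wP G mu hi phi_t phi_d \<longleftrightarrow>
     phi_t \<le> (\<integral>s\<in>{mu + phi_d..hi}. (s - (mu + phi_d)) \<partial>G)"

definition wHE :: "real measure \<Rightarrow> real \<Rightarrow> real \<Rightarrow> bool" where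
  "wHE G phi_d t \<longleftrightarrow> t - phi_d = cond_mean G t \<and>
     (\<forall>t'>t. t' - phi_d \<ge> cond_mean G t')"

definition feasible0 :: "real measure \<Rightarrow> real \<Rightarrow> real \<Rightarrow> real measure \<Rightarrow> real \<Rightarrow> real \<Rightarrow> bool" where
  "feasible0 F lo hi G phi_t t \<longleftrightarrow>
     G \<in> GammaF F lo hi \<and> wP G ((\<integral>s. s \<partial>F)) hi phi_t 0 \<and> wHE G 0 t"

definition objective :: "real measure \<Rightarrow> real \<Rightarrow> real \<Rightarrow> real \<Rightarrow> real" where
  "objective G phi_t phi_d t = phi_t + phi_d * (1 - cdf G t)"

end

theory Submission imports Defs begin

lemma inner1:
  fixes s m hi :: real
  assumes "s \<le> hi"
  shows "(\<integral>\<^sup>+ u. indicator {m<..hi} u * (if u < s then 1 else 0) \<partial>lborel)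
     = ennreal (indicator {m..hi} s * (s - m))"
proof -
  have "(\<integral>\<^sup>+ u. indicator {m<..hi} u * (if u < s then 1 else 0) \<partial>lborel)
      = (\<integral>\<^sup>+ u. indicator ({m<..hi} \<inter> {..<s}) u \<partial>lborel)"
    by (intro nn_integral_cong) (auto simp: indicator_def)
  also have "\<dots> = emeasure lborel ({m<..hi} \<inter> {..<s})"
    by (rule nn_integral_indicator) simp
  also have "\<dots> = ennreal (indicator {m..hi} s * (s - m))"
  proof (cases "m \<le> s")
    case True
    then have "{m<..hi} \<inter> {..<s} = {m<..<s}" using assms by auto
    then show ?thesis using True assms by (simp add: indicator_def)
  next
    case False
    then have "{m<..hi} \<inter> {..<s} = {}" by auto
    then show ?thesis using False by (simp add: indicator_def)
  qed
  finally show ?thesis .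
qed

lemma inner2:
  assumes "real_distribution G"
  shows "(\<integral>\<^sup>+ s. indicator {m<..hi} u * (if u < s then 1 else 0) \<partial>G)
     = ennreal (indicator {m<..hi} u * (1 - cdf G u))"
proof -
  interpret real_distribution G by fact
  have "(\<integral>\<^sup>+ s. indicator {m<..hi} u * (if u < s then 1 else 0) \<partial>G)
      = (\<integral>\<^sup>+ s. indicator {m<..hi} u * indicator {u<..} s \<partial>G)"
    by (intro nn_integral_cong) (auto simp: indicator_def)
  also have "\<dots> = indicator {m<..hi} u * emeasure G {u<..}"
    by (subst nn_integral_cmult) auto
  also have "emeasure G {u<..} = ennreal (1 - cdf G u)"
  proof -
    have "{u<..} = space G - {..u}" by auto
    then have "prob {u<..} = 1 - prob {..u}" using prob_compl by simp
    then show ?thesis by (simp add: emeasure_eq_measure cdf_def)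
  qed
  finally show ?thesis by (simp add: indicator_def)
qed

lemma supp_AE:
  assumes "real_distribution G" "measure G (-{lo..hi}) = 0"
  shows "AE s in G. s \<in> {lo..hi}"
proof -
  interpret real_distribution G by fact
  have "-{lo..hi} \<in> null_sets G"
    using assms(2) by (simp add: null_sets_def emeasure_eq_measure)
  then show ?thesis
    by (rule AE_I') auto
qed

lemma tonelli_part:
  assumes "real_distribution G" "measure G (-{lo..hi}) = 0" "m \<le> hi"
  shows "(\<integral>\<^sup>+ s. (\<integral>\<^sup>+ u. indicator {m<..hi} u * (if u < s then 1 else 0) \<partial>lborel) \<partial>G)
       = (\<integral>\<^sup>+ u. (\<integral>\<^sup>+ s. indicator {m<..hi} u * (if u < s then 1 else 0) \<partial>G) \<partial>lborel)"
proof -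
  interpret real_distribution G by fact
  interpret pair_sigma_finite G lborel
    unfolding pair_sigma_finite_def
    using prob_space_imp_sigma_finite prob_space_axioms lborel.sigma_finite_measure_axioms by blast
  show ?thesis
  proof (rule Fubini'[of "\<lambda>s u. indicator {m<..hi} u * (if u < s then 1 else 0)", symmetric])
    show "(\<lambda>(s, u). indicator {m<..hi} u * (if u < s then 1 else 0 :: ennreal)) \<in> borel_measurable (G \<Otimes>\<^sub>M lborel)"
      by measurable
  qed
qed


lemma cdf_meas: "real_distribution G \<Longrightarrow> cdf G \<in> borel_measurable borel"
  by (rule borel_measurable_mono) (simp add: mono_def finite_borel_measure.cdf_nondecreasing real_distribution.finite_borel_measure_M)

lemma K:
  assumes G: "real_distribution G" "measure G (-{lo..hi}) = 0" and mh: "m \<le> hi"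
  shows "(\<integral>s\<in>{m..hi}. (s-m) \<partial>G) = (hi - m) - (\<integral>u\<in>{m<..hi}. cdf G u \<partial>lborel)"
proof -
  interpret real_distribution G by fact
  have AE: "AE s in G. s \<in> {lo..hi}" by (rule supp_AE[OF G])
  have cm[measurable]: "cdf G \<in> borel_measurable borel" by (rule cdf_meas[OF G(1)])
  have L: "(\<integral>\<^sup>+ s. (\<integral>\<^sup>+ u. indicator {m<..hi} u * (if u < s then 1 else 0) \<partial>lborel) \<partial>G)
     = (\<integral>\<^sup>+ s. ennreal (indicator {m..hi} s * (s - m)) \<partial>G)"
    by (intro nn_integral_cong_AE eventually_mono[OF AE]) (simp add: inner1)
  have R: "(\<integral>\<^sup>+ u. (\<integral>\<^sup>+ s. indicator {m<..hi} u * (if u < s then 1 else 0) \<partial>G) \<partial>lborel)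
     = (\<integral>\<^sup>+ u. ennreal (indicator {m<..hi} u * (1 - cdf G u)) \<partial>lborel)"
    by (intro nn_integral_cong) (simp add: inner2[OF G(1)])
  have i1: "integrable G (\<lambda>s. indicator {m..hi} s * (s - m))"
  proof (rule integrable_const_bound[where B="hi - m"])
    show "AE x in G. norm (indicator {m..hi} x * (x - m)) \<le> hi - m"
      using mh by (intro AE_I2) (auto simp: indicator_def)
  qed measurable
  have i2: "integrable lborel (\<lambda>u. indicator {m<..hi} u * (1 - cdf G u))"
  proof (rule integrableI_bounded_set[where A="{m<..hi}" and B=1])
    show "AE x in lborel. x \<in> {m<..hi} \<longrightarrow> norm (indicator {m<..hi} x * (1 - cdf G x)) \<le> 1"
      by (intro AE_I2) (auto simp: indicator_def cdf_nonneg cdf_bounded_prob)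
  qed (use mh in auto)
  have i3: "integrable lborel (\<lambda>u. indicator {m<..hi} u * cdf G u)"
  proof (rule integrableI_bounded_set[where A="{m<..hi}" and B=1])
    show "AE x in lborel. x \<in> {m<..hi} \<longrightarrow> norm (indicator {m<..hi} x * (cdf G x)) \<le> 1"
      by (intro AE_I2) (auto simp: indicator_def cdf_nonneg cdf_bounded_prob)
  qed (use mh in auto)
  have i4: "integrable lborel (\<lambda>u. indicator {m<..hi} u :: real)"
    using mh by (simp add: integrable_indicator_iff)
  have n1: "0 \<le> (\<integral>s. indicator {m..hi} s * (s - m) \<partial>G)"
    by (intro integral_nonneg_AE AE_I2) (auto simp: indicator_def)
  have n2: "0 \<le> (\<integral>u. indicator {m<..hi} u * (1 - cdf G u) \<partial>lborel)"
    by (intro integral_nonneg_AE AE_I2) (auto simp: indicator_def cdf_bounded_prob)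
  have "ennreal (\<integral>s. indicator {m..hi} s * (s - m) \<partial>G)
      = ennreal (\<integral>u. indicator {m<..hi} u * (1 - cdf G u) \<partial>lborel)"
    using tonelli_part[OF G mh] L R
      nn_integral_eq_integral[OF i1] nn_integral_eq_integral[OF i2]
    by (auto simp: indicator_def cdf_bounded_prob)
  then have E: "(\<integral>s. indicator {m..hi} s * (s - m) \<partial>G)
      = (\<integral>u. indicator {m<..hi} u * (1 - cdf G u) \<partial>lborel)"
    using n1 n2 by simp
  have "(\<integral>u. indicator {m<..hi} u * (1 - cdf G u) \<partial>lborel)
     = (\<integral>u. indicator {m<..hi} u \<partial>lborel) - (\<integral>u. indicator {m<..hi} u * cdf G u \<partial>lborel)"
    using Bochner_Integration.integral_diff[OF i4 i3] by (simp add: algebra_simps)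
  also have "(\<integral>u. indicator {m<..hi} u \<partial>lborel) = hi - m"
    using mh by simp
  finally show ?thesis using E unfolding set_lebesgue_integral_def by simp
qed


lemma sd_rd: "supported_dist G lo hi \<Longrightarrow> real_distribution G"
  unfolding supported_dist_def real_distribution_def real_distribution_axioms_def by auto

lemma sd_null: "supported_dist G lo hi \<Longrightarrow> measure G (-{lo..hi}) = 0"
  unfolding supported_dist_def by auto

lemma int_supp:
  fixes f :: "real \<Rightarrow> real" and B :: real
  assumes G: "real_distribution G" "measure G (-{lo..hi}) = 0"
    and f: "f \<in> borel_measurable borel" and b: "\<And>s. s \<in> {lo..hi} \<Longrightarrow> \<bar>f s\<bar> \<le> B"
  shows "integrable G f"
proof -
  interpret real_distribution G by fact
  show ?thesis
  proof (rule integrable_const_bound[where B=B])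
    show "AE x in G. norm (f x) \<le> B"
      using supp_AE[OF G] by (rule eventually_mono) (simp add: b)
    show "f \<in> borel_measurable G" using f by simp
  qed
qed

lemma cdf_set_int:
  assumes G: "real_distribution G"
  shows "set_integrable lborel {a..b} (cdf G)" "set_integrable lborel {a<..b} (cdf G)"
proof -
  interpret real_distribution G by fact
  have cm[measurable]: "cdf G \<in> borel_measurable borel" by (rule cdf_meas[OF G])
  show "set_integrable lborel {a..b} (cdf G)" unfolding set_integrable_def
  proof (rule integrableI_bounded_set[where A="{a..b}" and B=1])
    show "AE x in lborel. x \<in> {a..b} \<longrightarrow> norm (indicator {a..b} x *\<^sub>R (cdf G x)) \<le> 1"
      by (intro AE_I2) (auto simp: indicator_def cdf_nonneg cdf_bounded_prob)
    show "emeasure lborel {a..b} < \<infinity>"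
      by (cases "a \<le> b") auto
  qed auto
  show "set_integrable lborel {a<..b} (cdf G)" unfolding set_integrable_def
  proof (rule integrableI_bounded_set[where A="{a<..b}" and B=1])
    show "AE x in lborel. x \<in> {a<..b} \<longrightarrow> norm (indicator {a<..b} x *\<^sub>R (cdf G x)) \<le> 1"
      by (intro AE_I2) (auto simp: indicator_def cdf_nonneg cdf_bounded_prob)
    show "emeasure lborel {a<..b} < \<infinity>"
      by (cases "a \<le> b") auto
  qed auto
qed

lemma split_cdf:
  assumes G: "real_distribution G" and "lo \<le> m" "m \<le> hi"
  shows "(\<integral>s\<in>{lo..hi}. cdf G s \<partial>lborel) = (\<integral>s\<in>{lo..m}. cdf G s \<partial>lborel) + (\<integral>s\<in>{m<..hi}. cdf G s \<partial>lborel)"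
proof -
  have e: "{lo..hi} = {lo..m} \<union> {m<..hi}" using assms by auto
  have d: "{lo..m} \<inter> {m<..hi} = {}" by auto
  show ?thesis unfolding e
    by (rule set_integral_Un[OF d cdf_set_int(1)[OF G] cdf_set_int(2)[OF G]])
qed

lemma KA:
  assumes G: "supported_dist G lo hi" and "lo \<le> m" "m \<le> hi"
  shows "(\<integral>s\<in>{m..hi}. (s-m) \<partial>G) = (hi - m) - ((\<integral>s\<in>{lo..hi}. cdf G s \<partial>lborel) - (\<integral>s\<in>{lo..m}. cdf G s \<partial>lborel))"
  using K[OF sd_rd[OF G] sd_null[OF G] assms(3)] split_cdf[OF sd_rd[OF G] assms(2,3)] by simp

theorem lemma10:
  fixes F :: "real measure" and lo hi :: real
  assumes "0 \<le> lo" and "lo < hi"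
    and "support_bounds F lo hi"
  shows "\<exists>t0. feasible0 F lo hi F (\<integral>s\<in>{(\<integral>s. s \<partial>F)..hi}. (s - (\<integral>s. s \<partial>F)) \<partial>F) t0 \<and>
    (\<forall>G phi_t t. feasible0 F lo hi G phi_t t \<longrightarrow>
       objective G phi_t 0 t \<le>
       objective F (\<integral>s\<in>{(\<integral>s. s \<partial>F)..hi}. (s - (\<integral>s. s \<partial>F)) \<partial>F) 0 t0)"
proof -
  have sF: "supported_dist F lo hi" using assms(3) unfolding support_bounds_def by auto
  have rF: "real_distribution F" by (rule sd_rd[OF sF])
  interpret F: real_distribution F by (rule rF)
  have nF: "measure F (-{lo..hi}) = 0" by (rule sd_null[OF sF])
  have AEF: "AE s in F. s \<in> {lo..hi}" by (rule supp_AE[OF rF nF])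
  define mu where "mu = (\<integral>s. s \<partial>F)"
  have iid: "integrable F (\<lambda>s. s)"
    by (rule int_supp[OF rF nF, where B="\<bar>lo\<bar> + \<bar>hi\<bar>"]) auto
  have mlo: "lo \<le> mu" unfolding mu_def
    by (rule F.integral_ge_const[OF iid]) (rule eventually_mono[OF AEF], simp)
  have mhi: "mu \<le> hi" unfolding mu_def
    by (rule F.integral_le_const[OF iid]) (rule eventually_mono[OF AEF], simp)
  have cm_lo: "cond_mean F lo = lo"
  proof (cases "cdf F lo = 0")
    case True then show ?thesis by (simp add: cond_mean_def)
  next
    case False
    have "(\<integral>s\<in>{..lo}. s \<partial>F) = (\<integral>s. indicator {..lo} s * lo \<partial>F)"
      unfolding set_lebesgue_integral_def
      by (rule integral_cong_AE) (auto intro!: eventually_mono[OF AEF] simp: indicator_def)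
    also have "\<dots> = lo * cdf F lo" by (simp add: cdf_def)
    finally show ?thesis using False by (simp add: cond_mean_def)
  qed
  have cm_le: "cond_mean F t \<le> t" for t
  proof (cases "cdf F t = 0")
    case True then show ?thesis by (simp add: cond_mean_def)
  next
    case False
    then have pos: "cdf F t > 0" using F.cdf_nonneg[of t] by linarith
    have "(\<integral>s\<in>{..t}. s \<partial>F) \<le> (\<integral>s. indicator {..t} s * t \<partial>F)"
      unfolding set_lebesgue_integral_def
    proof (rule integral_mono)
      show "integrable F (\<lambda>x. indicat_real {..t} x *\<^sub>R x)"
        by (rule int_supp[OF rF nF, where B="\<bar>lo\<bar> + \<bar>hi\<bar>"]) (auto simp: indicator_def)
      show "integrable F (\<lambda>x. indicat_real {..t} x * t)"
        by (rule int_supp[OF rF nF, where B="\<bar>t\<bar>"]) (auto simp: indicator_def)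
    qed (auto simp: indicator_def)
    also have "\<dots> = t * cdf F t" by (simp add: cdf_def integral_mult_left_zero)
    finally show ?thesis using pos by (simp add: cond_mean_def pos_divide_le_eq)
  qed
  have AF: "(\<integral>s\<in>{mu..hi}. (s-mu) \<partial>F) = (hi - mu) - ((\<integral>s\<in>{lo..hi}. cdf F s \<partial>lborel) - (\<integral>s\<in>{lo..mu}. cdf F s \<partial>lborel))"
    by (rule KA[OF sF mlo mhi])
  show ?thesis
  proof (intro exI[of _ lo] conjI allI impI)
    show "feasible0 F lo hi F (\<integral>s\<in>{(\<integral>s. s \<partial>F)..hi}. (s - (\<integral>s. s \<partial>F)) \<partial>F) lo"
      unfolding feasible0_def GammaF_def wP_def wHE_def
      using sF cm_lo cm_le by auto
  next
    fix G phi_t t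
    assume "feasible0 F lo hi G phi_t t"
    then have sG: "supported_dist G lo hi"
      and le: "(\<integral>s\<in>{lo..mu}. cdf G s \<partial>lborel) \<le> (\<integral>s\<in>{lo..mu}. cdf F s \<partial>lborel)"
      and eq: "(\<integral>s\<in>{lo..hi}. cdf G s \<partial>lborel) = (\<integral>s\<in>{lo..hi}. cdf F s \<partial>lborel)"
      and wp: "phi_t \<le> (\<integral>s\<in>{mu..hi}. (s-mu) \<partial>G)"
      unfolding feasible0_def GammaF_def wP_def mu_def by auto
    have AG: "(\<integral>s\<in>{mu..hi}. (s-mu) \<partial>G) = (hi - mu) - ((\<integral>s\<in>{lo..hi}. cdf G s \<partial>lborel) - (\<integral>s\<in>{lo..mu}. cdf G s \<partial>lborel))"
      by (rule KA[OF sG mlo mhi])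
    show "objective G phi_t 0 t \<le> objective F (\<integral>s\<in>{(\<integral>s. s \<partial>F)..hi}. (s - (\<integral>s. s \<partial>F)) \<partial>F) 0 lo"
      using wp AG AF le eq unfolding objective_def mu_def by simp
  qed
qed

end
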